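(* Let $0<4\alpha\leq 1$, $0<2\beta\leq 1$, $1/2-\alpha/4\leq\gamma<1$, $K\geq 0$, and let $n\geq(42K+4)/(\alpha^{2}\beta)$. If $G$ is a graph of order $n$ with \[ \mu(G)>\gamma n-K/n\quad\text{and}\quad \delta(G)\leq(\gamma-\alpha)n, \] then there exists an induced subgraph $H$ of $G$ with $|H|\geq(1-\beta)n$ satisfying at least one of the following conditions: (i) $\mu(H)>\gamma(1+\beta\alpha/2)|H|$; (ii) $\mu(H)>\gamma|H|$ and $\delta(H)>(\gamma-\alpha)|H|$.
   Context: Graphs are finite and simple. $\mu(G)$ denotes the largest eigenvalue of the adjacency matrix of $G$, $|G|$ the number of vertices of $G$, and $\delta(G)$ the minimum degree of $G$. *)

theory Defs
  imports Complex_Main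
begin

definition graph :: "'a set \<Rightarrow> ('a \<Rightarrow> 'a \<Rightarrow> bool) \<Rightarrow> bool" where
  "graph V E \<longleftrightarrow> finite V \<and> (\<forall>u\<in>V. \<forall>v\<in>V. E u v \<longleftrightarrow> E v u) \<and> (\<forall>v\<in>V. \<not> E v v)"

text \<open>Eigenvalues of the adjacency matrix (indexed by V): lambda with A x = lambda x for
some nonzero x : V -> real. (A is real symmetric, so all eigenvalues are real and
admit real eigenvectors.)\<close>
definition adj_eigenvalue :: "'a set \<Rightarrow> ('a \<Rightarrow> 'a \<Rightarrow> bool) \<Rightarrow> real \<Rightarrow> bool" where
  "adj_eigenvalue V E lam \<longleftrightarrow>
     (\<exists>x :: 'a \<Rightarrow> real. (\<exists>v\<in>V. x v \<noteq> 0) \<and>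
        (\<forall>v\<in>V. (\<Sum>u\<in>{u\<in>V. E v u}. x u) = lam * x v))"

definition mu :: "'a set \<Rightarrow> ('a \<Rightarrow> 'a \<Rightarrow> bool) \<Rightarrow> real" where
  "mu V E = Max {lam. adj_eigenvalue V E lam}"

definition degree :: "'a set \<Rightarrow> ('a \<Rightarrow> 'a \<Rightarrow> bool) \<Rightarrow> 'a \<Rightarrow> nat" where
  "degree V E v = card {u\<in>V. E v u}"

definition min_degree :: "'a set \<Rightarrow> ('a \<Rightarrow> 'a \<Rightarrow> bool) \<Rightarrow> nat" where
  "min_degree V E = Min (degree V E ` V)"

end

theory Submission imports Defs "Jordan_Normal_Form.Char_Poly" "HOL-Analysis.Function_Topology" "HOL-Analysis.Convex"
begin

lemma eig_finite:
  assumes "finite S"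
  shows "finite {lam. adj_eigenvalue S E lam}"
proof -
  define n where "n = card S"
  obtain f where f: "bij_betw f {0..<n} S"
    using ex_bij_betw_nat_finite[OF assms] n_def by blast
  define A :: "real mat" where "A = mat n n (\<lambda>(i,j). if E (f i) (f j) then 1 else 0)"
  have A: "A \<in> carrier_mat n n" by (simp add: A_def)
  have "{lam. adj_eigenvalue S E lam} \<subseteq> {k. poly (char_poly A) k = 0}"
  proof
    fix lam assume "lam \<in> {lam. adj_eigenvalue S E lam}"
    then obtain x where x0: "\<exists>v\<in>S. x v \<noteq> 0"
      and xe: "\<And>v. v\<in>S \<Longrightarrow> (\<Sum>u\<in>{u\<in>S. E v u}. x u) = lam * x v"
      unfolding adj_eigenvalue_def by auto
    define w where "w = vec n (\<lambda>i. x (f i))"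
    have wc: "w \<in> carrier_vec n" by (simp add: w_def)
    have "w \<noteq> 0\<^sub>v n"
    proof
      assume h: "w = 0\<^sub>v n"
      from x0 obtain s where s: "s \<in> S" "x s \<noteq> 0" by blast
      then obtain i where i: "i < n" "f i = s" using f unfolding bij_betw_def by auto
      have "w $ i = 0" using h i by simp
      then show False using i s by (simp add: w_def)
    qed
    moreover have "A *\<^sub>v w = lam \<cdot>\<^sub>v w"
    proof (rule eq_vecI)
      fix i assume i: "i < dim_vec (lam \<cdot>\<^sub>v w)"
      then have i: "i < n" by (simp add: w_def)
      have fi: "f i \<in> S" using f i unfolding bij_betw_def by auto
      have "(A *\<^sub>v w) $ i = (\<Sum>j<n. (if E (f i) (f j) then 1 else 0) * x (f j))"
        using i by (simp add: A_def w_def mult_mat_vec_def scalar_prod_def lessThan_atLeast0)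
      also have "\<dots> = (\<Sum>j\<in>{0..<n}. (\<lambda>u. if E (f i) u then x u else 0) (f j))"
        by (simp add: lessThan_atLeast0, intro sum.cong, auto)
      also have "\<dots> = (\<Sum>u\<in>S. if E (f i) u then x u else 0)"
        using sum.reindex_bij_betw[OF f] by simp
      also have "\<dots> = (\<Sum>u\<in>{u\<in>S. E (f i) u}. x u)"
        using assms by (simp add: sum.inter_filter)
      also have "\<dots> = lam * x (f i)" using xe fi by simp
      finally show "(A *\<^sub>v w) $ i = (lam \<cdot>\<^sub>v w) $ i" using i by (simp add: w_def)
    qed (simp add: A_def w_def)
    ultimately have "eigenvector A w lam" using wc A unfolding eigenvector_def by auto
    then have "eigenvalue A lam" unfolding eigenvalue_def by auto
    then show "lam \<in> {k. poly (char_poly A) k = 0}" using eigenvalue_root_char_poly[OF A] by simp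
  qed
  moreover have "char_poly A \<noteq> 0" using degree_monic_char_poly[OF A] by auto
  ultimately show ?thesis using poly_roots_finite finite_subset by blast
qed

definition adjv :: "'a set \<Rightarrow> ('a \<Rightarrow> 'a \<Rightarrow> bool) \<Rightarrow> ('a \<Rightarrow> real) \<Rightarrow> 'a \<Rightarrow> real" where
  "adjv S E x v = (\<Sum>u\<in>{u\<in>S. E v u}. x u)"
definition qf :: "'a set \<Rightarrow> ('a \<Rightarrow> 'a \<Rightarrow> bool) \<Rightarrow> ('a \<Rightarrow> real) \<Rightarrow> real" where
  "qf S E x = (\<Sum>v\<in>S. x v * adjv S E x v)"
definition nrm :: "'a set \<Rightarrow> ('a \<Rightarrow> real) \<Rightarrow> real" where
  "nrm S x = (\<Sum>v\<in>S. (x v)^2)"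

lemma adjv_alt: "finite S \<Longrightarrow> adjv S E x v = (\<Sum>u\<in>S. if E v u then x u else 0)"
  unfolding adjv_def by (simp add: sum.inter_filter)

lemma bf_sym:
  assumes "graph S E"
  shows "(\<Sum>v\<in>S. x v * adjv S E y v) = (\<Sum>v\<in>S. y v * adjv S E x v)"
proof -
  have fin: "finite S" using assms unfolding graph_def by auto
  have sym: "\<And>u v. u \<in> S \<Longrightarrow> v \<in> S \<Longrightarrow> E u v = E v u" using assms unfolding graph_def by auto
  have "(\<Sum>v\<in>S. x v * adjv S E y v) = (\<Sum>v\<in>S. \<Sum>u\<in>S. if E v u then x v * y u else 0)"
    by (simp add: adjv_alt[OF fin] sum_distrib_left if_distrib cong: if_cong)
  also have "\<dots> = (\<Sum>u\<in>S. \<Sum>v\<in>S. if E v u then x v * y u else 0)"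
    by (rule sum.swap)
  also have "\<dots> = (\<Sum>u\<in>S. \<Sum>v\<in>S. if E u v then y u * x v else 0)"
    by (intro sum.cong refl) (auto simp: sym mult.commute)
  also have "\<dots> = (\<Sum>v\<in>S. y v * adjv S E x v)"
    by (simp add: adjv_alt[OF fin] sum_distrib_left if_distrib cong: if_cong)
  finally show ?thesis .
qed

lemma adjv_lin: "adjv S E (\<lambda>v. x v + t * r v) w = adjv S E x w + t * adjv S E r w"
  unfolding adjv_def by (simp add: sum.distrib sum_distrib_left)

lemma qf_expand:
  assumes "graph S E"
  shows "qf S E (\<lambda>v. x v + t * r v) = qf S E x + 2 * t * (\<Sum>v\<in>S. r v * adjv S E x v) + t^2 * qf S E r"
proof -
  have "qf S E (\<lambda>v. x v + t * r v) = (\<Sum>v\<in>S. x v * adjv S E x v + t * (x v * adjv S E r v)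
        + t * (r v * adjv S E x v) + t^2 * (r v * adjv S E r v))"
    unfolding qf_def adjv_lin by (intro sum.cong refl) (simp add: algebra_simps power2_eq_square)
  also have "\<dots> = qf S E x + t * (\<Sum>v\<in>S. x v * adjv S E r v) + t * (\<Sum>v\<in>S. r v * adjv S E x v)
        + t^2 * qf S E r"
    unfolding qf_def by (simp add: sum.distrib sum_distrib_left)
  finally show ?thesis using bf_sym[OF assms, of x r] by simp
qed

lemma nrm_expand:
  "nrm S (\<lambda>v. x v + t * r v) = nrm S x + 2 * t * (\<Sum>v\<in>S. x v * r v) + t^2 * nrm S r"
proof -
  have "nrm S (\<lambda>v. x v + t * r v) = (\<Sum>v\<in>S. (x v)^2 + 2 * t * (x v * r v) + t^2 * (r v)^2)"
    unfolding nrm_def by (intro sum.cong refl) (simp add: algebra_simps power2_eq_square)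
  then show ?thesis unfolding nrm_def by (simp add: sum.distrib sum_distrib_left)
qed

lemma nrm_nonneg: "nrm S x \<ge> 0" unfolding nrm_def by (simp add: sum_nonneg)

lemma nrm_zero: "finite S \<Longrightarrow> nrm S x = 0 \<Longrightarrow> v \<in> S \<Longrightarrow> x v = 0"
  unfolding nrm_def using sum_nonneg_eq_0_iff[of S "\<lambda>v. (x v)^2"] by auto

lemma qf_cong: "(\<And>v. v \<in> S \<Longrightarrow> x v = y v) \<Longrightarrow> qf S E x = qf S E y"
  unfolding qf_def adjv_def by (intro sum.cong refl) auto

lemma nrm_cong: "(\<And>v. v \<in> S \<Longrightarrow> x v = y v) \<Longrightarrow> nrm S x = nrm S y"
  unfolding nrm_def by (intro sum.cong refl) auto

lemma qf_scale: "qf S E (\<lambda>v. c * x v) = c^2 * qf S E x"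
  unfolding qf_def adjv_def by (simp add: sum_distrib_left power2_eq_square algebra_simps flip: sum_distrib_left)

lemma nrm_scale: "nrm S (\<lambda>v. c * x v) = c^2 * nrm S x"
  unfolding nrm_def by (simp add: sum_distrib_left power_mult_distrib)

lemma exists_max:
  assumes "graph S E" "S \<noteq> {}"
  shows "\<exists>x. nrm S x = 1 \<and> (\<forall>y. qf S E y \<le> qf S E x * nrm S y)"
proof -
  have fin: "finite S" using assms unfolding graph_def by auto
  define X where "X = (\<lambda>v. if v \<in> S then {-1..1::real} else {0})"
  have "compactin (product_topology (\<lambda>i. euclidean) UNIV) (PiE UNIV X)"
    by (subst compactin_PiE) (auto simp: X_def compactin_euclidean_iff)
  then have c1: "compact (PiE UNIV X)"
    by (simp add: euclidean_product_topology compactin_euclidean_iff)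
  have cq: "continuous_on A (qf S E)" for A
    unfolding qf_def adjv_def
    by (intro continuous_intros continuous_on_subset[OF continuous_on_product_coordinates]) auto
  have cn: "continuous_on A (nrm S)" for A
    unfolding nrm_def
    by (intro continuous_intros continuous_on_subset[OF continuous_on_product_coordinates]) auto
  have "closed {x. nrm S x = 1}"
    by (rule closed_Collect_eq) (auto intro: cn)
  define K where "K = PiE UNIV X \<inter> {x. nrm S x = 1}"
  have cK: "compact K" unfolding K_def using c1 \<open>closed _\<close> by (rule compact_Int_closed)
  obtain s where s: "s \<in> S" using assms by auto
  have "(\<Sum>v\<in>S. ((if v = s then 1 else 0::real))^2) = (\<Sum>v\<in>S. if v = s then 1 else 0)"
    by (intro sum.cong) auto
  also have "\<dots> = 1" using s fin by simp
  finally have "(\<lambda>v. if v = s then 1 else 0) \<in> K"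
    unfolding K_def X_def nrm_def using s fin by (auto simp: PiE_def extensional_def)
  then have "K \<noteq> {}" by auto
  from continuous_attains_sup[OF cK this cq]
  obtain x where xK: "x \<in> K" and xm: "\<And>y. y \<in> K \<Longrightarrow> qf S E y \<le> qf S E x" by auto
  have "qf S E y \<le> qf S E x * nrm S y" for y
  proof (cases "nrm S y = 0")
    case True
    then have "qf S E y = qf S E (\<lambda>v. 0)" using nrm_zero[OF fin] by (intro qf_cong) auto
    then show ?thesis using True by (simp add: qf_def)
  next
    case False
    then have np: "nrm S y > 0" using nrm_nonneg[of S y] by auto
    define c where "c = 1 / sqrt (nrm S y)"
    define z where "z = (\<lambda>v. if v \<in> S then c * y v else 0)"
    have c2: "c^2 * nrm S y = 1" using np by (simp add: c_def power_divide)
    have nz: "nrm S z = 1" using nrm_cong[of S z "\<lambda>v. c * y v"] nrm_scale[of S c y] c2 by (simp add: z_def)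
    have "z v \<in> X v" for v
    proof (cases "v \<in> S")
      case True
      have "(y v)^2 \<le> nrm S y" unfolding nrm_def using True fin
        by (intro member_le_sum) auto
      then have "c^2 * (y v)^2 \<le> c^2 * nrm S y" by (intro mult_left_mono) auto
      then have "(z v)^2 \<le> 1" using True c2
        by (simp add: z_def power_mult_distrib)
      then have "\<bar>z v\<bar> \<le> 1" using abs_le_square_iff[of "z v" 1] by simp
      then show ?thesis using True by (simp add: X_def abs_le_iff)
    qed (simp add: X_def z_def)
    then have "z \<in> K" using nz unfolding K_def by (auto simp: PiE_def extensional_def)
    then have "qf S E z \<le> qf S E x" by (rule xm)
    moreover have "qf S E z = c^2 * qf S E y"
      using qf_cong[of S z "\<lambda>v. c * y v"] qf_scale[of S E c y] by (simp add: z_def)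
    ultimately have "c^2 * qf S E y * nrm S y \<le> qf S E x * nrm S y" using np
      by (intro mult_right_mono) auto
    moreover have "c^2 * qf S E y * nrm S y = qf S E y" using c2 by (simp add: algebra_simps)
    ultimately show ?thesis by simp
  qed
  moreover have "nrm S x = 1" using xK unfolding K_def by auto
  ultimately show ?thesis by auto
qed

lemma max_is_eigen:
  assumes g: "graph S E" and x1: "nrm S x = 1" and mx: "\<And>y. qf S E y \<le> qf S E x * nrm S y"
  shows "\<forall>v\<in>S. adjv S E x v = qf S E x * x v"
proof -
  have fin: "finite S" using g unfolding graph_def by auto
  define l where "l = qf S E x"
  define r where "r = (\<lambda>v. adjv S E x v - l * x v)"
  have key: "(\<Sum>v\<in>S. r v * adjv S E x v) - l * (\<Sum>v\<in>S. x v * r v) = nrm S r"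
    unfolding nrm_def r_def by (simp add: sum_distrib_left power2_eq_square algebra_simps flip: sum_subtractf)
  have ineq: "2 * t * nrm S r \<le> t^2 * (l * nrm S r - qf S E r)" for t
  proof -
    have "qf S E (\<lambda>v. x v + t * r v) \<le> l * nrm S (\<lambda>v. x v + t * r v)" using mx l_def by simp
    then have "l + 2 * t * (\<Sum>v\<in>S. r v * adjv S E x v) + t^2 * qf S E r
        \<le> l * (1 + 2 * t * (\<Sum>v\<in>S. x v * r v) + t^2 * nrm S r)"
      unfolding qf_expand[OF g] nrm_expand x1 l_def by simp
    then have "2 * t * ((\<Sum>v\<in>S. r v * adjv S E x v) - l * (\<Sum>v\<in>S. x v * r v))
        \<le> t^2 * (l * nrm S r - qf S E r)" by (simp add: algebra_simps)
    then show ?thesis using key by simp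
  qed
  have "nrm S r = 0"
  proof (rule ccontr)
    assume "nrm S r \<noteq> 0"
    then have np: "nrm S r > 0" using nrm_nonneg[of S r] by auto
    define D where "D = \<bar>l * nrm S r - qf S E r\<bar> + 1"
    have Dp: "D > 0" unfolding D_def by simp
    define t where "t = nrm S r / D"
    have tp: "t > 0" using np Dp unfolding t_def by simp
    have "2 * t * nrm S r \<le> t^2 * (l * nrm S r - qf S E r)" by (rule ineq)
    also have "\<dots> \<le> t^2 * D" unfolding D_def by (intro mult_left_mono) auto
    also have "\<dots> = t * nrm S r" using Dp unfolding t_def by (simp add: power2_eq_square)
    finally have "2 * t * nrm S r \<le> t * nrm S r" .
    moreover have "t * nrm S r > 0" using tp np by simp
    ultimately show False by linarith
  qed
  then have "\<forall>v\<in>S. r v = 0" using nrm_zero[OF fin] by auto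
  then show ?thesis unfolding r_def l_def by auto
qed

lemma nrm_pos: "finite S \<Longrightarrow> v \<in> S \<Longrightarrow> y v \<noteq> 0 \<Longrightarrow> nrm S y > 0"
  using nrm_zero[of S y v] nrm_nonneg[of S y] by force

lemma mu_char:
  assumes g: "graph S E" and ne: "S \<noteq> {}"
  shows "(\<exists>x. nrm S x = 1 \<and> (\<forall>v\<in>S. adjv S E x v = mu S E * x v)) \<and> (\<forall>y. qf S E y \<le> mu S E * nrm S y)"
proof -
  have fin: "finite S" using g unfolding graph_def by auto
  obtain x where x1: "nrm S x = 1" and mx: "\<And>y. qf S E y \<le> qf S E x * nrm S y"
    using exists_max[OF g ne] by auto
  have ev: "\<forall>v\<in>S. adjv S E x v = qf S E x * x v" using max_is_eigen[OF g x1 mx] .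
  have "\<exists>v\<in>S. x v \<noteq> 0"
  proof (rule ccontr)
    assume "\<not> ?thesis"
    then have "nrm S x = 0" unfolding nrm_def by simp
    then show False using x1 by simp
  qed
  then have A: "adj_eigenvalue S E (qf S E x)"
    unfolding adj_eigenvalue_def using ev unfolding adjv_def by blast
  have B: "lam \<le> qf S E x" if "adj_eigenvalue S E lam" for lam
  proof -
    from that obtain y v where v: "v \<in> S" "y v \<noteq> 0"
      and ye: "\<And>w. w\<in>S \<Longrightarrow> adjv S E y w = lam * y w"
      unfolding adj_eigenvalue_def adjv_def by blast
    have np: "nrm S y > 0" using nrm_pos[of S v y] fin v by blast
    have "qf S E y = lam * nrm S y"
      unfolding qf_def nrm_def using ye by (simp add: sum_distrib_left power2_eq_square algebra_simps)
    then have "lam * nrm S y \<le> qf S E x * nrm S y" using mx[of y] by simp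
    then show ?thesis using np by simp
  qed
  have "mu S E = qf S E x"
    unfolding mu_def by (rule Max_eqI) (use eig_finite[OF fin] A B in auto)
  then show ?thesis using x1 ev mx by auto
qed
lemma num1:
  fixes m k c d a g :: real
  assumes "m \<ge> g*k - c" "g*k - c \<ge> 0" "0 \<le> d" "d \<le> (g-a)*k" "0 < a" "a \<le> 1/4" "a \<le> g"
    "k*a \<ge> 4*c" "c \<ge> 0" "k > 0"
  shows "m^2*(1-a) \<ge> d*(a*k + (1-a)*d)"
proof -
  have "d*(a*k + (1-a)*d) \<le> ((g-a)*k)*(a*k + (1-a)*((g-a)*k))"
    using assms by (intro mult_mono add_left_mono mult_left_mono) auto
  also have "\<dots> = (1-a)*(g^2*k^2) - k^2*a*(g*(1-2*a) + a^2)"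
    by (simp add: algebra_simps power2_eq_square)
  also have "\<dots> \<le> (1-a)*(g^2*k^2) - (1-a)*2*g*k*c"
  proof -
    have nn: "0 \<le> g*k*c" using assms by simp
    have h1: "(1-a)*(g*k*c) \<le> g*k*c" using nn assms by (intro mult_left_le_one_le) auto
    have h2: "g*k*c \<le> g*k*(k*a/4)" using assms by (intro mult_left_mono) auto
    have nn2: "0 \<le> k*k*a*g" using assms by simp
    have h3: "k*k*a*g*(1/2) \<le> k*k*a*g*(1-2*a)" using assms nn2 by (intro mult_left_mono) auto
    have h4: "0 \<le> k*k*a*a*a" using assms by simp
    have e1: "(1-a)*2*g*k*c = 2*((1-a)*(g*k*c))" by simp
    have e2: "g*k*(k*a/4) = (k*k*a*g*(1/2))/2" by simp
    have e3: "k^2*a*(g*(1-2*a) + a^2) = k*k*a*g*(1-2*a) + k*k*a*a*a" by (simp add: power2_eq_square algebra_simps)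
    show ?thesis unfolding e1 e3 using h1 h2 h3 h4 e2 by linarith
  qed
  also have "\<dots> \<le> (1-a)*(g*k - c)^2"
  proof -
    have "g^2*k^2 - 2*g*k*c \<le> (g*k-c)^2" by (simp add: power2_eq_square algebra_simps)
    then have "(1-a)*(g^2*k^2 - 2*g*k*c) \<le> (1-a)*(g*k-c)^2" using assms by (intro mult_left_mono) auto
    then show ?thesis by (simp add: algebra_simps)
  qed
  also have "\<dots> \<le> (1-a)*m^2" using assms by (intro mult_left_mono power_mono) auto
  finally show ?thesis by (simp add: mult.commute)
qed
lemma num2:
  fixes m m' k s a b g :: real
  assumes "m \<ge> 0" "m \<le> g*(1+b*a/2)*k" "0 < a" "a \<le> 1/4" "0 < b" "b \<le> 1/2" "g > 0"
    "k*a \<ge> 8" "0 \<le> s" "s \<le> (1-a)/k" "m'*(1-s) \<ge> m*(1-2*s)"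
  shows "m' \<ge> m - g + 5*g*a/8"
proof -
  have kp: "k > 0" using assms by (smt (verit) mult_nonpos_nonneg)
  have k32: "k \<ge> 32" proof -
    have "k*a \<le> k*(1/4)" using kp assms by (intro mult_left_mono) auto
    then show ?thesis using assms by linarith
  qed
  have s1: "s*k \<le> 1-a" using assms kp by (simp add: field_simps)
  have slt: "s < 1" proof -
    have "s*k \<ge> s*1" using assms k32 by (intro mult_left_mono) auto
    then show ?thesis using s1 assms by linarith
  qed
  have B: "k - 1 + a > 0" using k32 assms by linarith
  have m1: "m' \<ge> m - m * (s/(1-s))"
  proof -
    have "m' \<ge> m*(1-2*s)/(1-s)" using assms slt by (simp add: field_simps)
    moreover have "m*(1-2*s)/(1-s) = m - m*(s/(1-s))" using slt by (simp add: field_simps)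
    ultimately show ?thesis by simp
  qed
  have r: "s/(1-s) \<le> (1-a)/(k-1+a)"
  proof -
    have "s*(k-1+a) \<le> (1-a)*(1-s)" using s1 by (simp add: algebra_simps)
    then show ?thesis using slt B by (simp add: field_simps)
  qed
  have m2: "m*(s/(1-s)) \<le> m*((1-a)/(k-1+a))" using r assms by (intro mult_left_mono) auto
  have m3: "m*((1-a)/(k-1+a)) \<le> g*(1-5*a/8)"
  proof -
    have "m*(1-a) \<le> (g*(1+b*a/2)*k)*(1-a)" using assms by (intro mult_right_mono) auto
    also have "\<dots> \<le> g*k*((1+a/4)*(1-a))"
    proof -
      have "1+b*a/2 \<le> 1+a/4" using assms by (simp add: mult_right_mono[of b "1/2" a, simplified] mult.commute)
      then have "(1+b*a/2)*(1-a) \<le> (1+a/4)*(1-a)" using assms by (intro mult_right_mono) auto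
      then have "g*k*((1+b*a/2)*(1-a)) \<le> g*k*((1+a/4)*(1-a))" using assms kp by (intro mult_left_mono) auto
      then show ?thesis by (simp add: algebra_simps)
    qed
    also have "\<dots> \<le> g*k*(1-3*a/4)"
    proof -
      have "(1+a/4)*(1-a) \<le> 1-3*a/4" by (simp add: algebra_simps power2_eq_square[symmetric])
      then show ?thesis using assms kp by (intro mult_left_mono) auto
    qed
    also have "\<dots> \<le> g*((1-5*a/8)*(k-1+a))"
    proof -
      have e: "k*(1-3*a/4) - (1-5*a/8)*(k-1+a) = (8 + 5*(a*a) - 13*a - a*k)/8" by (simp add: field_simps)
      have aa: "a*a \<le> a" using mult_left_mono[of a 1 a] assms by simp
      have ak: "a*k \<ge> 8" using assms(8) by (simp add: mult.commute)
      have "8 + 5*(a*a) - 13*a - a*k \<le> 0" using aa ak assms(3) by linarith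
      then have "(8 + 5*(a*a) - 13*a - a*k)/8 \<le> 0" by simp
      then have "k*(1-3*a/4) \<le> (1-5*a/8)*(k-1+a)" using e by linarith
      then show ?thesis using assms by (simp add: mult_left_mono mult.assoc)
    qed
    finally have "m*(1-a) \<le> g*(1-5*a/8)*(k-1+a)" by (simp add: mult.assoc)
    then show ?thesis using B by (simp add: field_simps)
  qed
  show ?thesis using m1 m2 m3 by (simp add: algebra_simps)
qed

lemma graph_subset: "graph V E \<Longrightarrow> S \<subseteq> V \<Longrightarrow> graph S E"
  unfolding graph_def by (auto intro: finite_subset)

lemma qf_remove:
  assumes g: "graph S E" and u: "u \<in> S"
  shows "qf S E x = qf (S-{u}) E x + 2 * x u * adjv S E x u"
proof -
  have fin: "finite S" using g unfolding graph_def by auto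
  have sym: "\<And>a b. a \<in> S \<Longrightarrow> b \<in> S \<Longrightarrow> E a b = E b a" and irr: "\<not> E u u"
    using g u unfolding graph_def by auto
  have A: "adjv S E x v = adjv (S-{u}) E x v + (if E v u then x u else 0)" for v
    using fin u by (simp add: adjv_alt sum.remove)
  have Au: "adjv S E x u = (\<Sum>v\<in>S-{u}. if E u v then x v else 0)"
    using fin u irr by (simp add: adjv_alt sum.remove)
  have "qf S E x = x u * adjv S E x u + (\<Sum>v\<in>S-{u}. x v * adjv S E x v)"
    unfolding qf_def using fin u by (simp add: sum.remove)
  also have "(\<Sum>v\<in>S-{u}. x v * adjv S E x v) = qf (S-{u}) E x + (\<Sum>v\<in>S-{u}. x v * (if E v u then x u else 0))"
    unfolding qf_def A by (simp add: algebra_simps sum.distrib)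
  also have "(\<Sum>v\<in>S-{u}. x v * (if E v u then x u else 0)) = x u * adjv S E x u"
    unfolding Au sum_distrib_left using u by (intro sum.cong refl) (auto simp: sym)
  finally show ?thesis by simp
qed

lemma nrm_remove: "finite S \<Longrightarrow> u \<in> S \<Longrightarrow> nrm S x = nrm (S-{u}) x + (x u)^2"
  unfolding nrm_def by (simp add: sum.remove)

lemma removal:
  assumes g: "graph S E" and u: "u \<in> S" and x1: "nrm S x = 1"
    and ev: "\<forall>v\<in>S. adjv S E x v = m * x v" and ne: "S - {u} \<noteq> {}"
  shows "mu (S-{u}) E * (1 - (x u)^2) \<ge> m * (1 - 2 * (x u)^2)"
proof -
  have fin: "finite S" using g unfolding graph_def by auto
  have g': "graph (S-{u}) E" using graph_subset[OF g] by auto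
  have "qf S E x = m * nrm S x" unfolding qf_def nrm_def using ev
    by (simp add: sum_distrib_left power2_eq_square algebra_simps)
  then have q: "qf S E x = m" using x1 by simp
  have Q: "qf (S-{u}) E x = m * (1 - 2 * (x u)^2)" using qf_remove[OF g u, of x] q ev u
    by (simp add: power2_eq_square algebra_simps)
  have N: "nrm (S-{u}) x = 1 - (x u)^2" using nrm_remove[OF fin u, of x] x1 by simp
  have "qf (S-{u}) E x \<le> mu (S-{u}) E * nrm (S-{u}) x" using mu_char[OF g' ne] by blast
  then show ?thesis unfolding Q N .
qed

lemma good_vertex:
  assumes g: "graph S E" and k: "k = real (card S)" and kp: "k > 0"
    and x1: "nrm S x = 1" and ev: "\<forall>v\<in>S. adjv S E x v = m * x v"
    and u: "u \<in> S" and du: "real (Defs.degree S E u) \<le> (gm - a) * k"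
    and h: "m \<ge> gm*k - c" "gm*k - c > 0" "0 < a" "a \<le> 1/4" "a \<le> gm" "k*a \<ge> 4*c" "c \<ge> 0"
  shows "\<exists>w\<in>S. (x w)^2 \<le> (1-a)/k"
proof (rule ccontr)
  assume "\<not> ?thesis"
  then have big: "\<And>w. w \<in> S \<Longrightarrow> (x w)^2 > (1-a)/k" by force
  have fin: "finite S" using g unfolding graph_def by auto
  define Nu where "Nu = {w\<in>S. E u w}"
  define d where "d = real (card Nu)"
  have dd: "d = real (Defs.degree S E u)" unfolding d_def Nu_def Defs.degree_def by simp
  have NuS: "Nu \<subseteq> S" unfolding Nu_def by auto
  have finN: "finite Nu" using fin NuS finite_subset by blast
  have cardD: "card (S - Nu) = card S - card Nu" using card_Diff_subset[OF finN NuS] .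
  have cle: "card Nu \<le> card S" using card_mono[OF fin NuS] .
  have "m * x u = (\<Sum>w\<in>Nu. x w)" using ev u unfolding adjv_def Nu_def by simp
  then have cs: "(m * x u)^2 \<le> (\<Sum>w\<in>Nu. (x w)^2) * d"
    unfolding d_def using sum_squared_le_sum_of_squares[of x Nu] by simp
  have split: "nrm S x = (\<Sum>w\<in>Nu. (x w)^2) + (\<Sum>w\<in>S-Nu. (x w)^2)"
    unfolding nrm_def using sum.subset_diff[OF NuS fin, of "\<lambda>w. (x w)^2"] by simp
  have "(\<Sum>w\<in>S-Nu. (x w)^2) \<ge> real (card (S-Nu)) * ((1-a)/k)"
    using big by (intro sum_bounded_below) (auto intro: less_imp_le)
  then have lowS: "(\<Sum>w\<in>S-Nu. (x w)^2) \<ge> (k - d) * ((1-a)/k)"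
    using cardD cle k d_def by (simp add: of_nat_diff)
  have mpos: "m > 0" using h by linarith
  have "m^2 * ((1-a)/k) < m^2 * (x u)^2" using big[OF u] mpos by (intro mult_strict_left_mono) auto
  also have "\<dots> = (m * x u)^2" by (simp add: power_mult_distrib)
  also have "\<dots> \<le> (1 - (k - d) * ((1-a)/k)) * d"
  proof -
    have "(\<Sum>w\<in>Nu. (x w)^2) \<le> 1 - (k - d) * ((1-a)/k)" using split x1 lowS by linarith
    then have "(\<Sum>w\<in>Nu. (x w)^2) * d \<le> (1 - (k - d) * ((1-a)/k)) * d"
      by (intro mult_right_mono) (auto simp: d_def)
    then show ?thesis using cs by linarith
  qed
  finally have "m^2 * ((1-a)/k) < (1 - (k - d) * ((1-a)/k)) * d" .
  then have L: "m^2*((1-a)/k)*k < (1 - (k-d)*((1-a)/k))*d*k" using kp by (intro mult_strict_right_mono)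
  have E1: "m^2*((1-a)/k)*k = m^2*(1-a)" using kp by simp
  have E2: "(1 - (k-d)*((1-a)/k))*d*k = d*(a*k + (1-a)*d)" using kp by (simp add: field_simps)
  have "m^2 * (1-a) < d * (a*k + (1-a)*d)" using L unfolding E1 E2 .
  moreover have "m^2*(1-a) \<ge> d*(a*k + (1-a)*d)"
    by (rule num1[of gm k c m d a]) (use h du dd kp in \<open>auto simp: d_def\<close>)
  ultimately show False by linarith
qed

lemma step:
  assumes g: "graph S E" and ne: "S \<noteq> {}" and k: "k = real (card S)"
    and m: "m = mu S E" and h: "m \<ge> gm*k - c" "gm*k - c > 0" "m \<le> gm*(1+b*a/2)*k"
    "0 < a" "a \<le> 1/4" "0 < b" "b \<le> 1/2" "a \<le> gm" "c \<ge> 0" "k*a \<ge> 4*c" "k*a \<ge> 8"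
    and u: "u \<in> S" and du: "real (Defs.degree S E u) \<le> (gm - a) * k"
  shows "\<exists>w\<in>S. mu (S-{w}) E \<ge> m - gm + 5*gm*a/8"
proof -
  have fin: "finite S" using g unfolding graph_def by auto
  have kp: "k > 0" using k ne fin by (simp add: card_gt_0_iff)
  obtain x where x1: "nrm S x = 1" and ev: "\<forall>v\<in>S. adjv S E x v = m * x v"
    using mu_char[OF g ne] m by blast
  obtain w where w: "w \<in> S" and s: "(x w)^2 \<le> (1-a)/k"
    using good_vertex[OF g k kp x1 ev u du h(1,2,4,5,8,10,9)] by blast
  have k32: "k \<ge> 32" proof -
    have "k*a \<le> k*(1/4)" using kp h by (intro mult_left_mono) auto
    then show ?thesis using h by linarith
  qed
  have "card S \<ge> 2" using k k32 by linarith
  then have ne': "S - {w} \<noteq> {}"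
    using w by (metis Diff_empty Diff_insert0 card_1_singleton_iff insert_Diff
        is_singletonI' is_singleton_altdef numeral_le_one_iff semiring_norm(69) singleton_insert_inj_eq')
  have rem: "mu (S-{w}) E * (1 - (x w)^2) \<ge> m * (1 - 2 * (x w)^2)"
    using removal[OF g w x1 ev ne'] .
  have "mu (S-{w}) E \<ge> m - gm + 5*gm*a/8"
    by (rule num2[of m gm b a k "(x w)^2"]) (use h kp s rem in auto)
  then show ?thesis using w by blast
qed

theorem theorem3:
  fixes V :: "'a set" and E :: "'a \<Rightarrow> 'a \<Rightarrow> bool"
    and \<alpha> \<beta> \<gamma> K :: real
  assumes "0 < 4 * \<alpha>" and "4 * \<alpha> \<le> 1"
    and "0 < 2 * \<beta>" and "2 * \<beta> \<le> 1"
    and "1/2 - \<alpha>/4 \<le> \<gamma>" and "\<gamma> < 1"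
    and "K \<ge> 0"
    and "graph V E"
    and "real (card V) \<ge> (42 * K + 4) / (\<alpha>^2 * \<beta>)"
    and "mu V E > \<gamma> * real (card V) - K / real (card V)"
    and "real (min_degree V E) \<le> (\<gamma> - \<alpha>) * real (card V)"
  shows "\<exists>S \<subseteq> V. real (card S) \<ge> (1 - \<beta>) * real (card V) \<and>
           (mu S E > \<gamma> * (1 + \<beta> * \<alpha> / 2) * real (card S) \<or>
            (mu S E > \<gamma> * real (card S) \<and>
             real (min_degree S E) > (\<gamma> - \<alpha>) * real (card S)))"
  (is "\<exists>S \<subseteq> V. ?G S")
proof -
  note a = assms
  define n where "n = real (card V)"
  define c where "c = K / n"
  define gg where "gg = 5*\<gamma>*\<alpha>/8"
  have al: "0 < \<alpha>" "\<alpha> \<le> 1/4" and be: "0 < \<beta>" "\<beta> \<le> 1/2" using a by auto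
  have ga: "\<gamma> \<ge> 7/16" using a by linarith
  have fin: "finite V" using a(8) unfolding graph_def by auto
  have A: "\<alpha>^2 * \<beta> > 0" using al be by simp
  have An: "\<alpha>^2 * \<beta> * n \<ge> 42 * K + 4" using a(9) A unfolding n_def by (simp add: pos_divide_le_eq mult.commute)
  have npos: "n > 0"
  proof -
    have "\<alpha>^2 * \<beta> * n > 0" using An a(7) by linarith
    then show ?thesis using A by (simp add: zero_less_mult_iff)
  qed
  have Vne: "V \<noteq> {}" using npos unfolding n_def by auto
  have c0: "c \<ge> 0" unfolding c_def using a(7) npos by simp
  have cK: "42 * c \<le> \<alpha>^2 * \<beta>"
  proof -
    have "42 * K \<le> \<alpha>^2 * \<beta> * n" using An by linarith
    then show ?thesis unfolding c_def using npos by (simp add: field_simps)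
  qed
  have a2: "\<alpha>^2 \<le> 1/16" proof -
    have "\<alpha>^2 \<le> (1/4)^2" using al by (intro power_mono) auto
    also have "(1/4::real)^2 = 1/16" by (simp add: power2_eq_square)
    finally show ?thesis .
  qed
  have bn: "\<beta> * n \<ge> 64"
  proof -
    have "\<alpha>^2 * (\<beta> * n) \<ge> 4" using An a(7) by (simp add: mult.assoc)
    moreover have "\<alpha>^2 * (\<beta> * n) \<le> (1/16) * (\<beta> * n)" using a2 be npos by (intro mult_right_mono) auto
    ultimately show ?thesis by linarith
  qed
  have an: "\<alpha> * n \<ge> 32"
  proof -
    have "(\<alpha> * n) * (\<alpha> * \<beta>) \<ge> 4" using An a(7) by (simp add: power2_eq_square algebra_simps)
    moreover have "\<alpha> * \<beta> \<le> 1/8"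
    proof -
      have "\<alpha> * \<beta> \<le> (1/4) * (1/2)" using al be by (intro mult_mono) auto
      then show ?thesis by simp
    qed
    moreover have "\<alpha> * n \<ge> 0" using al npos by simp
    ultimately have "4 \<le> (\<alpha> * n) * (1/8)"
      using mult_left_mono[of "\<alpha> * \<beta>" "1/8" "\<alpha> * n"] by linarith
    then show ?thesis by simp
  qed
  have cs: "c \<le> \<alpha> / 336"
  proof -
    have "\<alpha>^2 * \<beta> \<le> \<alpha> * (1/4) * (1/2)"
    proof -
      have "\<alpha>^2 * \<beta> = \<alpha> * \<alpha> * \<beta>" by (simp add: power2_eq_square)
      also have "\<dots> \<le> \<alpha> * (1/4) * (1/2)" using al be by (intro mult_mono) auto
      finally show ?thesis .
    qed
    then show ?thesis using cK by simp
  qed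
  have gpos: "\<gamma> * \<alpha> > 0" using al ga by simp
  have gc: "gg > c"
  proof -
    have "\<gamma> * \<alpha> \<ge> 7/16 * \<alpha>" using ga al by (intro mult_right_mono) auto
    then show ?thesis unfolding gg_def using cs al by linarith
  qed
  define T where "T = nat \<lfloor>\<beta> * n\<rfloor>"
  have T1: "real T \<le> \<beta> * n" unfolding T_def using bn by linarith
  have T2: "real T > \<beta> * n - 1" unfolding T_def using bn by linarith
  define P where "P t = (\<exists>S\<subseteq>V. card S + t = card V \<and> mu S E \<ge> \<gamma> * real (card S) - c + real t * gg
                          \<and> (t = 0 \<longrightarrow> S = V))" for t
  have claim: "t \<le> T \<Longrightarrow> (\<exists>S \<subseteq> V. ?G S) \<or> P t" for t
  proof (induction t)
    case 0
    have "mu V E \<ge> \<gamma> * real (card V) - c + real 0 * gg" using a(10) unfolding c_def n_def by simp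
    then show ?case unfolding P_def by auto
  next
    case (Suc t)
    show ?case
    proof (cases "\<exists>S \<subseteq> V. ?G S")
      case True then show ?thesis by blast
    next
      case False
      with Suc obtain S where S: "S \<subseteq> V" "card S + t = card V"
        and mS: "mu S E \<ge> \<gamma> * real (card S) - c + real t * gg" and S0: "t = 0 \<longrightarrow> S = V"
        unfolding P_def by auto
      define k where "k = real (card S)"
      have kn: "k = n - real t" using S(2) unfolding k_def n_def by linarith
      have tT: "real t + 1 \<le> \<beta> * n" using Suc.prems T1 by linarith
      have kb: "k \<ge> (1 - \<beta>) * n + 1" using kn tT by (simp add: algebra_simps)
      have kh: "k \<ge> n / 2"
      proof -
        have "\<beta> * n \<le> (1/2) * n" using be npos by (intro mult_right_mono) auto
        then show ?thesis using kb by (simp add: algebra_simps)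
      qed
      have ka: "k * \<alpha> \<ge> 16"
      proof -
        have "k * \<alpha> \<ge> (n/2) * \<alpha>" using kh al by (intro mult_right_mono) auto
        then show ?thesis using an by (simp add: mult.commute)
      qed
      have k64: "k \<ge> 64"
      proof -
        have "k * \<alpha> \<le> k * (1/4)" using al kh npos by (intro mult_left_mono) auto
        then show ?thesis using ka by linarith
      qed
      have kp: "k > 0" using k64 by linarith
      have Sne: "S \<noteq> {}" using kp unfolding k_def by auto
      have gS: "graph S E" using graph_subset[OF a(8) S(1)] .
      have finS: "finite S" using gS unfolding graph_def by auto
      have notG: "\<not> ?G S" using False S(1) by blast
      have size: "real (card S) \<ge> (1 - \<beta>) * real (card V)" using kb unfolding k_def n_def by linarith
      have ni: "mu S E \<le> \<gamma> * (1 + \<beta> * \<alpha> / 2) * k" using notG size unfolding k_def by auto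
      have tg0: "real t * gg \<ge> 0" using gc c0 by simp
      have mlow: "mu S E \<ge> \<gamma> * k - c" using mS tg0 unfolding k_def by linarith
      have gkc: "\<gamma> * k - c > 0"
      proof -
        have "\<gamma> * k \<ge> 7/16 * k" using ga kp by (intro mult_right_mono) auto
        then show ?thesis using cs al k64 by linarith
      qed
      have "\<exists>u\<in>S. real (Defs.degree S E u) \<le> (\<gamma> - \<alpha>) * k"
      proof (cases "t = 0")
        case True
        then have SV: "S = V" using S0 by simp
        have "min_degree V E \<in> Defs.degree V E ` V" unfolding min_degree_def using fin Vne by (intro Min_in) auto
        then obtain u where "u \<in> V" "min_degree V E = Defs.degree V E u" by auto
        then show ?thesis using a(11) SV unfolding k_def by auto
      next
        case False
        then have "real t \<ge> 1" by simp
        then have "real t * gg \<ge> 1 * gg" using gc c0 by (intro mult_right_mono) auto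
        then have "mu S E \<ge> \<gamma> * k - c + gg" using mS unfolding k_def by linarith
        then have "mu S E > \<gamma> * k" using gc by linarith
        then have "\<not> real (min_degree S E) > (\<gamma> - \<alpha>) * k" using notG size unfolding k_def by auto
        moreover have "min_degree S E \<in> Defs.degree S E ` S" unfolding min_degree_def using finS Sne by (intro Min_in) auto
        ultimately obtain u where "u \<in> S" "min_degree S E = Defs.degree S E u"
          and "\<not> real (min_degree S E) > (\<gamma> - \<alpha>) * k" by auto
        then have "real (Defs.degree S E u) \<le> (\<gamma> - \<alpha>) * k" by simp
        then show ?thesis using \<open>u \<in> S\<close> by blast
      qed
      then obtain u where u: "u \<in> S" "real (Defs.degree S E u) \<le> (\<gamma> - \<alpha>) * k" by blast
      have "\<exists>w\<in>S. mu (S-{w}) E \<ge> mu S E - \<gamma> + 5*\<gamma>*\<alpha>/8"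
      proof -
        have x1: "\<alpha> \<le> \<gamma>" using ga al by linarith
        have x2: "k * \<alpha> \<ge> 4 * c" using cs al ka by linarith
        have x3: "k * \<alpha> \<ge> 8" using ka by linarith
        show ?thesis by (rule step[OF gS Sne k_def refl mlow gkc ni al be x1 c0 x2 x3 u])
      qed
      then obtain w where w: "w \<in> S" and mw: "mu (S-{w}) E \<ge> mu S E - \<gamma> + gg" unfolding gg_def by blast
      have cw: "card (S - {w}) = card S - 1" using w finS by simp
      have cw1: "card S \<ge> 1" using k64 k_def by linarith
      have "P (Suc t)" unfolding P_def
      proof (intro exI[of _ "S - {w}"] conjI)
        show "S - {w} \<subseteq> V" using S by auto
        show "card (S - {w}) + Suc t = card V" using cw cw1 S(2) by simp
        have "real (card (S - {w})) = k - 1" using cw cw1 unfolding k_def by (simp add: of_nat_diff)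
        then show "mu (S - {w}) E \<ge> \<gamma> * real (card (S - {w})) - c + real (Suc t) * gg"
        proof -
          have "real (Suc t) * gg = real t * gg + gg" by (simp add: algebra_simps)
          moreover have "\<gamma> * real (card (S - {w})) = \<gamma> * k - \<gamma>"
            by (simp only: \<open>real (card (S - {w})) = k - 1\<close> right_diff_distrib mult_1_right)
          moreover have "\<gamma> * real (card S) = \<gamma> * k" using k_def by simp
          ultimately show ?thesis using mw mS by linarith
        qed
      qed simp
      then show ?thesis by blast
    qed
  qed
  show ?thesis
  proof (cases "\<exists>S \<subseteq> V. ?G S")
    case True then show ?thesis by blast
  next
    case False
    with claim[of T] obtain S where S: "S \<subseteq> V" "card S + T = card V"
        and mS: "mu S E \<ge> \<gamma> * real (card S) - c + real T * gg"
      unfolding P_def by auto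
    have kn: "real (card S) = n - real T" using S(2) unfolding n_def by linarith
    have size: "real (card S) \<ge> (1 - \<beta>) * real (card V)" using kn T1 unfolding n_def by (simp add: algebra_simps)
    define P0 where "P0 = \<gamma> * \<alpha>"
    have TP: "real T * P0 \<ge> (\<beta> * n - 1) * P0" using T2 gpos unfolding P0_def by (intro mult_right_mono) auto
    have bnP: "(\<beta> * n) * P0 \<ge> 64 * P0" using bn gpos unfolding P0_def by (intro mult_right_mono) auto
    have cP: "c < P0"
    proof -
      have "\<gamma> * \<alpha> \<ge> 7/16 * \<alpha>" using ga al by (intro mult_right_mono) auto
      then show ?thesis unfolding P0_def using cs al by linarith
    qed
    have TbP: "real T * P0 * \<beta> \<ge> 0" using gpos be unfolding P0_def by simp
    have "\<gamma> * (1 + \<beta> * \<alpha> / 2) * real (card S) = \<gamma> * real (card S) + (P0 * \<beta> / 2) * (n - real T)"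
      unfolding kn P0_def by (simp add: algebra_simps)
    also have "\<dots> = \<gamma> * real (card S) + (\<beta> * n) * P0 / 2 - real T * P0 * \<beta> / 2"
      by (simp add: field_simps)
    also have "\<dots> < \<gamma> * real (card S) - c + real T * gg"
    proof -
      have "real T * gg = 5/8 * (real T * P0)" unfolding gg_def P0_def by simp
      moreover have "(\<beta> * n - 1) * P0 = (\<beta> * n) * P0 - P0" by (simp add: algebra_simps)
      ultimately show ?thesis using TP bnP cP TbP gpos unfolding P0_def[symmetric] by linarith
    qed
    finally have "mu S E > \<gamma> * (1 + \<beta> * \<alpha> / 2) * real (card S)" using mS by linarith
    then show ?thesis using S(1) size by blast
  qed
qed

end
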